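(* Let $n\equiv 2\pmod 4$. Let $E$ be a non-empty subset of $\{1,3,\dots,n-1\}$, let $I\subseteq\{0,1,\dots,n/2\}$, and suppose $E\cap\{i,n-i\}=\emptyset$ for all $i\in I$. Then the hypercube $Q_n$ admits a $D$-magic labeling for $$D=E\cup\bigcup_{i\in I}\{i,n-i\}.$$
   Context: The hypercube $Q_n$ has vertex set $\mathbb{F}_2^n$, two vertices adjacent iff they differ in exactly one coordinate; $d(x,y)$ is the graph distance. For a set of distances $D$ and a vertex $x$ of a graph $G$, $N_D(x)=\{y\in V(G): d(x,y)\in D\}$. For a graph $G$ of order $N$, a $D$-magic labeling is a bijection $f:V(G)\to\{1,\dots,N\}$ for which there exists a constant $k$ with $\sum_{y\in N_D(x)}f(y)=k$ for every vertex $x$. *)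

theory Defs
  imports Main
begin

fun walk :: "('a \<Rightarrow> 'a \<Rightarrow> bool) \<Rightarrow> 'a list \<Rightarrow> bool" where
  "walk Adj [] = True"
| "walk Adj [x] = True"
| "walk Adj (x # y # xs) = (Adj x y \<and> walk Adj (y # xs))"

text \<open>Graph distance: least number of edges in a walk within V from x to y
  (only meaningful for connected graphs, as the hypercube is).\<close>
definition graph_dist :: "'a set \<Rightarrow> ('a \<Rightarrow> 'a \<Rightarrow> bool) \<Rightarrow> 'a \<Rightarrow> 'a \<Rightarrow> nat" where
  "graph_dist V Adj x y =
     (LEAST k. \<exists>xs. length xs = Suc k \<and> set xs \<subseteq> V \<and> walk Adj xs
                    \<and> hd xs = x \<and> last xs = y)"

definition hcube_verts :: "nat \<Rightarrow> bool list set" where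
  "hcube_verts n = {x. length x = n}"

definition hcube_adj :: "bool list \<Rightarrow> bool list \<Rightarrow> bool" where
  "hcube_adj x y = (length x = length y \<and> card {i. i < length x \<and> x ! i \<noteq> y ! i} = 1)"

definition dist_nbhd :: "'a set \<Rightarrow> ('a \<Rightarrow> 'a \<Rightarrow> bool) \<Rightarrow> nat set \<Rightarrow> 'a \<Rightarrow> 'a set" where
  "dist_nbhd V Adj D x = {y \<in> V. graph_dist V Adj x y \<in> D}"

definition is_D_magic_labeling :: "'a set \<Rightarrow> ('a \<Rightarrow> 'a \<Rightarrow> bool) \<Rightarrow> nat set \<Rightarrow> ('a \<Rightarrow> nat) \<Rightarrow> bool" where
  "is_D_magic_labeling V Adj D f \<longleftrightarrow>
     bij_betw f V {1..card V} \<and>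
     (\<exists>k. \<forall>x\<in>V. (\<Sum>y\<in>dist_nbhd V Adj D x. f y) = k)"

definition D_magic :: "'a set \<Rightarrow> ('a \<Rightarrow> 'a \<Rightarrow> bool) \<Rightarrow> nat set \<Rightarrow> bool" where
  "D_magic V Adj D \<longleftrightarrow> (\<exists>f. is_D_magic_labeling V Adj D f)"

end

theory Submission
  imports Defs "HOL-Library.Nat_Bijection"
begin

definition hamd :: "bool list \<Rightarrow> bool list \<Rightarrow> nat" where
  "hamd x y = card {i. i < length x \<and> x ! i \<noteq> y ! i}"

lemma hamd_tri:
  assumes "length a = length b" "length b = length c"
  shows "hamd a c \<le> hamd a b + hamd b c"
proof -
  have "{i. i < length a \<and> a ! i \<noteq> c ! i} \<subseteq> {i. i < length a \<and> a ! i \<noteq> b ! i} \<union> {i. i < length b \<and> b ! i \<noteq> c ! i}"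
    using assms by auto
  then have "card {i. i < length a \<and> a ! i \<noteq> c ! i} \<le> card ({i. i < length a \<and> a ! i \<noteq> b ! i} \<union> {i. i < length b \<and> b ! i \<noteq> c ! i})"
    by (intro card_mono) auto
  also have "\<dots> \<le> hamd a b + hamd b c" unfolding hamd_def by (rule card_Un_le)
  finally show ?thesis unfolding hamd_def .
qed

lemma adj_hamd: "hcube_adj x y \<Longrightarrow> hamd x y = 1 \<and> length x = length y"
  unfolding hcube_adj_def hamd_def by auto

lemma walk_bound:
  "walk hcube_adj xs \<Longrightarrow> xs \<noteq> [] \<Longrightarrow> set xs \<subseteq> hcube_verts n \<Longrightarrow> hamd (hd xs) (last xs) \<le> length xs - 1"
proof (induction xs)
  case Nil then show ?case by simp
next
  case (Cons a xs)
  show ?case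
  proof (cases xs)
    case Nil
    then show ?thesis by (simp add: hamd_def)
  next
    case (Cons b rest)
    note xsb = this
    have adj: "hcube_adj a b" and w: "walk hcube_adj xs" using Cons.prems xsb by auto
    have ih: "hamd b (last xs) \<le> length xs - 1" using Cons.IH w Cons.prems xsb by auto
    have "last xs \<in> set xs" using xsb by simp
    then have lens: "length a = n" "length b = n" "length (last xs) = n"
      using Cons.prems xsb by (auto simp: hcube_verts_def)
    have "hamd a (last xs) \<le> hamd a b + hamd b (last xs)" using lens by (intro hamd_tri) auto
    then show ?thesis using adj_hamd[OF adj] ih xsb by simp
  qed
qed

lemma walk_exists:
  "length x = n \<Longrightarrow> length y = n \<Longrightarrow> hamd x y = k \<Longrightarrow>
   \<exists>xs. length xs = Suc k \<and> set xs \<subseteq> hcube_verts n \<and> walk hcube_adj xs \<and> hd xs = x \<and> last xs = y"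
proof (induction k arbitrary: x)
  case 0
  then have "{i. i < length x \<and> x ! i \<noteq> y ! i} = {}" unfolding hamd_def by simp
  then have "x = y" using 0 by (intro nth_equalityI) auto
  then show ?case using 0 by (intro exI[of _ "[x]"]) (auto simp: hcube_verts_def)
next
  case (Suc k)
  let ?A = "{i. i < length x \<and> x ! i \<noteq> y ! i}"
  have "?A \<noteq> {}"
  proof
    assume "?A = {}"
    then have "hamd x y = 0" unfolding hamd_def by simp
    with Suc.prems show False by simp
  qed
  then obtain i where i: "i < n" "x ! i \<noteq> y ! i" using Suc.prems by auto
  define x' where "x' = x[i := y ! i]"
  have lx': "length x' = n" using Suc.prems by (simp add: x'_def)
  have A': "{j. j < length x' \<and> x' ! j \<noteq> y ! j} = ?A - {i}"
    using i Suc.prems by (auto simp: x'_def nth_list_update)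
  have "i \<in> ?A" using i Suc.prems by auto
  then have "hamd x' y = k" using Suc.prems i unfolding hamd_def A' by simp
  then obtain xs where xs: "length xs = Suc k" "set xs \<subseteq> hcube_verts n" "walk hcube_adj xs" "hd xs = x'" "last xs = y"
    using Suc.IH[OF lx' Suc.prems(2)] by blast
  have adj: "hcube_adj x x'"
  proof -
    have "{j. j < length x \<and> x ! j \<noteq> x' ! j} = {i}" using i Suc.prems by (auto simp: x'_def nth_list_update)
    then show ?thesis unfolding hcube_adj_def using lx' Suc.prems by simp
  qed
  obtain b rest where xsb: "xs = b # rest" using xs(1) by (cases xs) auto
  show ?case
    apply (rule exI[of _ "x # xs"])
    using xs adj xsb Suc.prems by (auto simp: hcube_verts_def)
qed

lemma graph_dist_hamd:
  assumes "length x = n" "length y = n"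
  shows "graph_dist (hcube_verts n) hcube_adj x y = hamd x y"
  unfolding graph_dist_def
proof (rule Least_equality)
  show "\<exists>xs. length xs = Suc (hamd x y) \<and> set xs \<subseteq> hcube_verts n \<and> walk hcube_adj xs \<and> hd xs = x \<and> last xs = y"
    using walk_exists[OF assms refl] by blast
next
  fix k assume "\<exists>xs. length xs = Suc k \<and> set xs \<subseteq> hcube_verts n \<and> walk hcube_adj xs \<and> hd xs = x \<and> last xs = y"
  then obtain xs where "length xs = Suc k" "set xs \<subseteq> hcube_verts n" "walk hcube_adj xs" "hd xs = x" "last xs = y"
    by blast
  then show "hamd x y \<le> k" using walk_bound[of xs n] by force
qed

definition sdiff :: "nat set \<Rightarrow> nat set \<Rightarrow> nat set" where
  "sdiff A B = (A - B) \<union> (B - A)"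

lemma card_sdiff:
  assumes "finite A" "finite B"
  shows "card (sdiff A B) + 2 * card (A \<inter> B) = card A + card B"
proof -
  have d: "(A - B) \<inter> (B - A) = {}" by auto
  have "card (sdiff A B) = card (A - B) + card (B - A)"
    unfolding sdiff_def using assms d by (simp add: card_Un_disjoint)
  moreover have "card (A - B) = card A - card (A \<inter> B)" using assms by (simp add: card_Diff_subset_Int)
  moreover have "card (B - A) = card B - card (A \<inter> B)" using assms
    by (metis Int_commute card_Diff_subset_Int finite_Int)
  moreover have "card (A \<inter> B) \<le> card A" "card (A \<inter> B) \<le> card B" using assms by (auto intro: card_mono)
  ultimately show ?thesis by simp
qed

lemma parity_sdiff:
  assumes "finite A" "finite B"
  shows "odd (card (sdiff A B \<inter> S)) \<longleftrightarrow> (odd (card (A \<inter> S)) \<noteq> odd (card (B \<inter> S)))"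
proof -
  have "sdiff A B \<inter> S = sdiff (A \<inter> S) (B \<inter> S)" by (auto simp: sdiff_def)
  then have "card (sdiff A B \<inter> S) + 2 * card ((A \<inter> S) \<inter> (B \<inter> S)) = card (A \<inter> S) + card (B \<inter> S)"
    using card_sdiff[of "A \<inter> S" "B \<inter> S"] assms by simp
  then show ?thesis by presburger
qed

lemma sdiff_sdiff [simp]: "sdiff X (sdiff X Z) = Z"
  by (auto simp: sdiff_def)

definition Sk :: "nat \<Rightarrow> nat \<Rightarrow> nat set" where
  "Sk n k = (if k < n div 2 then insert k {n div 2..<n-1} else insert k {1..<n div 2})"

definition Phi :: "nat \<Rightarrow> nat set \<Rightarrow> nat set" where
  "Phi n Y = {k. k < n \<and> odd (card (Y \<inter> Sk n k))}"

definition lab :: "nat \<Rightarrow> nat set \<Rightarrow> nat" where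
  "lab n Y = 1 + set_encode (Phi n Y)"

lemma Sk_props:
  assumes n: "n mod 4 = 2" and k: "k < n"
  shows "Sk n k \<subseteq> {..<n}" "card (Sk n k) = n div 2"
proof -
  have m: "n div 2 \<ge> 1" "n = 2 * (n div 2)" using n by presburger+
  show "Sk n k \<subseteq> {..<n}" using k unfolding Sk_def by auto
  show "card (Sk n k) = n div 2"
  proof (cases "k < n div 2")
    case True
    then show ?thesis unfolding Sk_def using m by simp
  next
    case False
    then show ?thesis unfolding Sk_def using m by simp
  qed
qed

lemma kernel:
  assumes n: "n mod 4 = 2" and Z: "Z \<subseteq> {..<n}" and ev: "\<forall>k<n. even (card (Z \<inter> Sk n k))"
  shows "Z = {}"
proof -
  define m where "m = n div 2"
  have m: "n = 2 * m" "odd m" "m \<ge> 1" using n unfolding m_def by presburger+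
  define B where "B = {m..<n-1}"
  define A where "A = {1..<m}"
  define \<beta> where "\<beta> = card (Z \<inter> B)"
  define \<alpha> where "\<alpha> = card (Z \<inter> A)"
  have fZ: "finite Z" using Z finite_subset by blast
  have lo: "k \<in> Z \<longleftrightarrow> odd \<beta>" if "k < m" for k
  proof -
    have "k \<notin> B" using that unfolding B_def by auto
    have e: "Z \<inter> Sk n k = (if k \<in> Z then insert k (Z \<inter> B) else Z \<inter> B)"
      using that unfolding Sk_def B_def m_def by auto
    have "card (Z \<inter> Sk n k) = (if k \<in> Z then Suc \<beta> else \<beta>)"
      unfolding e \<beta>_def using \<open>k \<notin> B\<close> fZ by auto
    moreover have "even (card (Z \<inter> Sk n k))" using ev that m by auto
    ultimately show ?thesis by (auto split: if_splits)
  qed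
  have hi: "k \<in> Z \<longleftrightarrow> odd \<alpha>" if "m \<le> k" "k < n" for k
  proof -
    have "k \<notin> A" using that unfolding A_def by auto
    have e: "Z \<inter> Sk n k = (if k \<in> Z then insert k (Z \<inter> A) else Z \<inter> A)"
      using that unfolding Sk_def A_def m_def by auto
    have "card (Z \<inter> Sk n k) = (if k \<in> Z then Suc \<alpha> else \<alpha>)"
      unfolding e \<alpha>_def using \<open>k \<notin> A\<close> fZ by auto
    moreover have "even (card (Z \<inter> Sk n k))" using ev that m by auto
    ultimately show ?thesis by (auto split: if_splits)
  qed
  show ?thesis
  proof (cases "odd \<beta>")
    case True
    then have "A \<subseteq> Z" using lo unfolding A_def by auto
    then have "\<alpha> = m - 1" unfolding \<alpha>_def A_def by (simp add: Int_absorb1)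
    then have "even \<alpha>" using m by presburger
    then have "Z \<inter> B = {}" using hi unfolding B_def by auto
    then have "\<beta> = 0" unfolding \<beta>_def by simp
    with True show ?thesis by simp
  next
    case False
    then have "Z \<inter> A = {}" using lo unfolding A_def by auto
    then have "\<alpha> = 0" unfolding \<alpha>_def by simp
    then show ?thesis using hi lo False Z by (meson odd_pos subsetD lessThan_iff not_le less_irrefl subset_empty subsetI)
  qed
qed

lemma Phi_inj:
  assumes n: "n mod 4 = 2"
  shows "inj_on (Phi n) (Pow {..<n})"
proof (rule inj_onI)
  fix Y Y' assume Y: "Y \<in> Pow {..<n}" "Y' \<in> Pow {..<n}" and eq: "Phi n Y = Phi n Y'"
  have fin: "finite Y" "finite Y'" using Y finite_subset by auto
  have "\<forall>k<n. even (card (sdiff Y Y' \<inter> Sk n k))"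
  proof (intro allI impI)
    fix k assume "k < n"
    then have "odd (card (Y \<inter> Sk n k)) = odd (card (Y' \<inter> Sk n k))"
      using eq unfolding Phi_def by blast
    then show "even (card (sdiff Y Y' \<inter> Sk n k))" using parity_sdiff[OF fin] by blast
  qed
  moreover have "sdiff Y Y' \<subseteq> {..<n}" using Y unfolding sdiff_def by auto
  ultimately have "sdiff Y Y' = {}" using kernel[OF n] by blast
  then show "Y = Y'" unfolding sdiff_def by blast
qed


definition N0 :: "nat \<Rightarrow> nat set \<Rightarrow> nat set set" where
  "N0 n D = {Z. Z \<subseteq> {..<n} \<and> card Z \<in> D}"

lemma finite_N0: "finite (N0 n D)"
  unfolding N0_def by (rule finite_subset[of _ "Pow {..<n}"]) auto

lemma half_gen:
  assumes S: "S \<subseteq> {..<n}" "card S = m" "n = 2*m" "odd m"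
    and Dc: "\<forall>d\<in>D. even d \<longrightarrow> n - d \<in> D"
  shows "card {Z\<in>N0 n D. odd (card (Z \<inter> S))} = card {Z\<in>N0 n D. \<not> odd (card (Z \<inter> S))}"
proof -
  define T where "T = {..<n} - S"
  have fS: "finite S" using S(1) finite_subset by blast
  have cT: "card T = m" unfolding T_def using S fS by (simp add: card_Diff_subset)
  obtain g where g: "bij_betw g S T" using finite_same_card_bij[of S T] fS cT S(2) unfolding T_def by auto
  define h where "h = inv_into S g"
  have h: "bij_betw h T S" unfolding h_def using g by (rule bij_betw_inv_into)
  have ginj: "inj_on g S" and gim: "g ` S = T" using g by (auto simp: bij_betw_def)
  have hinj: "inj_on h T" and him: "h ` T = S" using h by (auto simp: bij_betw_def)
  define \<sigma> where "\<sigma> Z = g ` (Z \<inter> S) \<union> h ` (Z - S)" for Z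
  define P where "P Z = odd (card (Z \<inter> S))" for Z
  define \<tau> where "\<tau> Z = (if odd (card Z) then \<sigma> Z else {..<n} - Z)" for Z
  have TS: "T \<inter> S = {}" unfolding T_def by auto
  have sig: "\<sigma> Z \<subseteq> {..<n} \<and> \<sigma> Z \<inter> S = h ` (Z - S) \<and> \<sigma> Z - S = g ` (Z \<inter> S)
      \<and> card (\<sigma> Z) = card Z \<and> card (\<sigma> Z \<inter> S) = card (Z - S) \<and> \<sigma> (\<sigma> Z) = Z"
    if Z: "Z \<subseteq> {..<n}" for Z
  proof -
    have fZ: "finite Z" using Z finite_subset by blast
    have i1: "g ` (Z \<inter> S) \<subseteq> T" using gim by auto
    have ZS: "Z - S \<subseteq> T" using Z unfolding T_def by auto
    have i2: "h ` (Z - S) \<subseteq> S" using him ZS by auto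
    have a1: "\<sigma> Z \<inter> S = h ` (Z - S)" unfolding \<sigma>_def using i1 i2 TS by auto
    have a2: "\<sigma> Z - S = g ` (Z \<inter> S)" unfolding \<sigma>_def using i1 i2 TS by auto
    have sub: "\<sigma> Z \<subseteq> {..<n}" unfolding \<sigma>_def using i1 i2 S(1) unfolding T_def by auto
    have c1: "card (g ` (Z \<inter> S)) = card (Z \<inter> S)" by (rule card_image) (rule inj_on_subset[OF ginj], auto)
    have c2: "card (h ` (Z - S)) = card (Z - S)" by (rule card_image) (rule inj_on_subset[OF hinj ZS])
    have "card (\<sigma> Z) = card (g ` (Z \<inter> S)) + card (h ` (Z - S))"
      unfolding \<sigma>_def using i1 i2 TS fZ fS
      by (intro card_Un_disjoint) (auto intro: finite_subset)
    also have "\<dots> = card (Z \<inter> S) + card (Z - S)" using c1 c2 by simp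
    also have "\<dots> = card Z" using fZ
      by (metis Diff_Diff_Int card_Diff_subset_Int card_mono finite_Int inf_le1 le_add_diff_inverse inf_commute)
    finally have c: "card (\<sigma> Z) = card Z" .
    have "\<sigma> (\<sigma> Z) = g ` (h ` (Z - S)) \<union> h ` (g ` (Z \<inter> S))"
      unfolding \<sigma>_def[of "\<sigma> Z"] a1 a2 ..
    also have "g ` (h ` (Z - S)) = Z - S" unfolding h_def by (rule image_inv_into_cancel[OF gim ZS])
    also have "h ` (g ` (Z \<inter> S)) = Z \<inter> S" unfolding h_def by (rule inv_into_image_cancel[OF ginj]) auto
    finally have "\<sigma> (\<sigma> Z) = Z" by auto
    then show ?thesis using a1 a2 sub c c2 by simp
  qed
  have tau: "\<tau> Z \<in> N0 n D \<and> \<tau> (\<tau> Z) = Z \<and> (P (\<tau> Z) \<longleftrightarrow> \<not> P Z)" if Z: "Z \<in> N0 n D" for Z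
  proof (cases "odd (card Z)")
    case True
    have Zs: "Z \<subseteq> {..<n}" "card Z \<in> D" using Z unfolding N0_def by auto
    have fZ: "finite Z" using Zs finite_subset by blast
    have sp: "card (Z \<inter> S) + card (Z - S) = card Z" using fZ
      by (metis Diff_Diff_Int card_Diff_subset_Int card_mono finite_Int inf_le1 le_add_diff_inverse inf_commute)
    have t: "\<tau> Z = \<sigma> Z" unfolding \<tau>_def using True by simp
    have t2: "\<tau> (\<sigma> Z) = \<sigma> (\<sigma> Z)" unfolding \<tau>_def using True sig[OF Zs(1)] by simp
    have s1: "\<sigma> Z \<subseteq> {..<n}" "card (\<sigma> Z) = card Z" "card (\<sigma> Z \<inter> S) = card (Z - S)" "\<sigma> (\<sigma> Z) = Z"
      using sig[OF Zs(1)] by auto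
    have "odd (card (\<sigma> Z \<inter> S)) \<longleftrightarrow> \<not> odd (card (Z \<inter> S))"
      unfolding s1(3) using True sp by presburger
    then show ?thesis unfolding t t2 P_def N0_def using s1 Zs by simp
  next
    case False
    have Zs: "Z \<subseteq> {..<n}" "card Z \<in> D" using Z unfolding N0_def by auto
    have fZ: "finite Z" using Zs finite_subset by blast
    have cz: "card Z \<le> n" using card_mono[OF _ Zs(1)] by simp
    have cc: "card ({..<n} - Z) = n - card Z" using Zs fZ by (simp add: card_Diff_subset)
    have t: "\<tau> Z = {..<n} - Z" unfolding \<tau>_def using False by simp
    have ev2: "even (card ({..<n} - Z))" unfolding cc using False S(3) cz by presburger
    have t2: "\<tau> ({..<n} - Z) = {..<n} - ({..<n} - Z)" unfolding \<tau>_def using ev2 by simp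
    have "({..<n} - Z) \<inter> S = S - (Z \<inter> S)" using S(1) by auto
    then have "card (({..<n} - Z) \<inter> S) = m - card (Z \<inter> S)" using fS S(2) by (simp add: card_Diff_subset)
    moreover have "card (Z \<inter> S) \<le> m" using fS S(2) card_mono[of S "Z \<inter> S"] by auto
    ultimately have "P ({..<n} - Z) \<longleftrightarrow> \<not> P Z" unfolding P_def using S(4) by presburger
    moreover have "n - card Z \<in> D" using Dc Zs False by auto
    ultimately show ?thesis unfolding t t2 N0_def using Zs cc by auto
  qed
  have "bij_betw \<tau> {Z\<in>N0 n D. P Z} {Z\<in>N0 n D. \<not> P Z}"
    by (rule bij_betw_byWitness[where f'=\<tau>]) (use tau in auto)
  then show ?thesis unfolding P_def by (rule bij_betw_same_card)
qed


lemma lab_expand: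
  "lab n Y = 1 + (\<Sum>k<n. if odd (card (Y \<inter> Sk n k)) then 2^k else 0)"
proof -
  have "Phi n Y = {k \<in> {..<n}. odd (card (Y \<inter> Sk n k))}" unfolding Phi_def by auto
  then have "set_encode (Phi n Y) = (\<Sum>k<n. if odd (card (Y \<inter> Sk n k)) then 2^k else 0)"
    unfolding set_encode_def using sum.inter_filter[of "{..<n}" "\<lambda>k. (2::nat)^k" "\<lambda>k. odd (card (Y \<inter> Sk n k))"]
    by simp
  then show ?thesis unfolding lab_def by simp
qed

lemma count_shift:
  assumes n: "n mod 4 = 2" and k: "k < n" and Dc: "\<forall>d\<in>D. even d \<longrightarrow> n - d \<in> D"
    and X: "finite X"
  shows "card {Z\<in>N0 n D. odd (card (sdiff X Z \<inter> Sk n k))} = card {Z\<in>N0 n D. odd (card (Z \<inter> Sk n k))}"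
proof -
  let ?P = "\<lambda>Z. odd (card (Z \<inter> Sk n k))"
  have fin: "finite Z" if "Z \<in> N0 n D" for Z
    using that unfolding N0_def by (auto intro: finite_subset)
  have eq: "{Z\<in>N0 n D. ?P (sdiff X Z)} = {Z\<in>N0 n D. ?P X \<noteq> ?P Z}"
    using parity_sdiff[OF X fin] by blast
  have h: "card {Z\<in>N0 n D. ?P Z} = card {Z\<in>N0 n D. \<not> ?P Z}"
    using half_gen[OF Sk_props(1)[OF n k] Sk_props(2)[OF n k] _ _ Dc] n by presburger
  show ?thesis
  proof (cases "?P X")
    case True
    then show ?thesis unfolding eq using h by simp
  next
    case False
    then show ?thesis unfolding eq by simp
  qed
qed

lemma sum_formula:
  assumes n: "n mod 4 = 2" and Dc: "\<forall>d\<in>D. even d \<longrightarrow> n - d \<in> D" and X: "finite X"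
  shows "(\<Sum>Z\<in>N0 n D. lab n (sdiff X Z))
     = card (N0 n D) + (\<Sum>k<n. 2^k * card {Z\<in>N0 n D. odd (card (Z \<inter> Sk n k))})"
proof -
  have "(\<Sum>Z\<in>N0 n D. lab n (sdiff X Z))
      = (\<Sum>Z\<in>N0 n D. 1) + (\<Sum>Z\<in>N0 n D. \<Sum>k<n. if odd (card (sdiff X Z \<inter> Sk n k)) then 2^k else 0)"
    unfolding lab_expand sum.distrib by simp
  also have "(\<Sum>Z\<in>N0 n D. \<Sum>k<n. if odd (card (sdiff X Z \<inter> Sk n k)) then 2^k else 0)
      = (\<Sum>k<n. \<Sum>Z\<in>N0 n D. if odd (card (sdiff X Z \<inter> Sk n k)) then 2^k else 0)"
    by (rule sum.swap)
  also have "\<dots> = (\<Sum>k<n. 2^k * card {Z\<in>N0 n D. odd (card (sdiff X Z \<inter> Sk n k))})"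
  proof (rule sum.cong[OF refl])
    fix k assume "k \<in> {..<n}"
    have "(\<Sum>Z\<in>N0 n D. if odd (card (sdiff X Z \<inter> Sk n k)) then (2::nat)^k else 0)
        = (\<Sum>Z\<in>{Z\<in>N0 n D. odd (card (sdiff X Z \<inter> Sk n k))}. 2^k)"
      using sum.inter_filter[OF finite_N0[of n D], where g="\<lambda>Z. (2::nat)^k" and P="\<lambda>Z. odd (card (sdiff X Z \<inter> Sk n k))"]
      by simp
    then show "(\<Sum>Z\<in>N0 n D. if odd (card (sdiff X Z \<inter> Sk n k)) then (2::nat)^k else 0)
        = 2^k * card {Z\<in>N0 n D. odd (card (sdiff X Z \<inter> Sk n k))}" by simp
  qed
  also have "\<dots> = (\<Sum>k<n. 2^k * card {Z\<in>N0 n D. odd (card (Z \<inter> Sk n k))})"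
    using count_shift[OF n _ Dc X] by (intro sum.cong) auto
  finally show ?thesis by simp
qed


definition setof :: "nat \<Rightarrow> bool list \<Rightarrow> nat set" where
  "setof n x = {i. i < n \<and> x ! i}"

definition mk :: "nat \<Rightarrow> nat set \<Rightarrow> bool list" where
  "mk n Y = map (\<lambda>i. i \<in> Y) [0..<n]"

lemma setof_sub: "setof n x \<subseteq> {..<n}" unfolding setof_def by auto

lemma setof_mk: "Y \<subseteq> {..<n} \<Longrightarrow> setof n (mk n Y) = Y"
  unfolding setof_def mk_def by auto

lemma mk_setof: "length x = n \<Longrightarrow> mk n (setof n x) = x"
  unfolding setof_def mk_def by (auto intro: nth_equalityI)

lemma length_mk [simp]: "length (mk n Y) = n" unfolding mk_def by simp

lemma hamd_setof:
  assumes "length x = n" "length y = n"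
  shows "hamd x y = card (sdiff (setof n x) (setof n y))"
proof -
  have "{i. i < length x \<and> x ! i \<noteq> y ! i} = sdiff (setof n x) (setof n y)"
    using assms unfolding setof_def sdiff_def by auto
  then show ?thesis unfolding hamd_def by simp
qed

lemma nbhd_sum:
  assumes x: "length x = n"
  shows "(\<Sum>y\<in>dist_nbhd (hcube_verts n) hcube_adj D x. lab n (setof n y))
       = (\<Sum>Z\<in>N0 n D. lab n (sdiff (setof n x) Z))"
proof -
  let ?X = "setof n x"
  let ?NB = "dist_nbhd (hcube_verts n) hcube_adj D x"
  have NB: "?NB = {y. length y = n \<and> hamd x y \<in> D}"
  proof -
    have "dist_nbhd (hcube_verts n) hcube_adj D x = {y \<in> hcube_verts n. graph_dist (hcube_verts n) hcube_adj x y \<in> D}"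
      unfolding dist_nbhd_def by simp
    also have "\<dots> = {y. length y = n \<and> hamd x y \<in> D}"
      using graph_dist_hamd[OF x] unfolding hcube_verts_def by auto
    finally show ?thesis .
  qed
  have sX: "?X \<subseteq> {..<n}" by (rule setof_sub)
  have sd: "sdiff ?X Z \<subseteq> {..<n}" if "Z \<subseteq> {..<n}" for Z
    using that sX unfolding sdiff_def by auto
  have bij: "bij_betw (\<lambda>Z. mk n (sdiff ?X Z)) (N0 n D) ?NB"
  proof (rule bij_betw_byWitness[where f'="\<lambda>y. sdiff ?X (setof n y)"])
    show "\<forall>Z\<in>N0 n D. sdiff ?X (setof n (mk n (sdiff ?X Z))) = Z"
      using sd setof_mk unfolding N0_def by auto
    show "\<forall>y\<in>?NB. mk n (sdiff ?X (sdiff ?X (setof n y))) = y"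
      unfolding NB using mk_setof by auto
    show "(\<lambda>Z. mk n (sdiff ?X Z)) ` N0 n D \<subseteq> ?NB"
    proof
      fix y assume "y \<in> (\<lambda>Z. mk n (sdiff ?X Z)) ` N0 n D"
      then obtain Z where Z: "Z \<in> N0 n D" "y = mk n (sdiff ?X Z)" by auto
      have "hamd x y = card (sdiff ?X (setof n y))" using hamd_setof[OF x] Z by simp
      also have "\<dots> = card Z" using Z setof_mk[OF sd] unfolding N0_def by auto
      finally show "y \<in> ?NB" unfolding NB using Z unfolding N0_def by auto
    qed
    show "(\<lambda>y. sdiff ?X (setof n y)) ` ?NB \<subseteq> N0 n D"
    proof
      fix Z assume "Z \<in> (\<lambda>y. sdiff ?X (setof n y)) ` ?NB"
      then obtain y where y: "y \<in> ?NB" "Z = sdiff ?X (setof n y)" by auto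
      then have "length y = n" "hamd x y \<in> D" unfolding NB by auto
      then show "Z \<in> N0 n D" unfolding N0_def using y(2) hamd_setof[OF x] sd[OF setof_sub]
        using sX setof_sub[of n y] unfolding sdiff_def by auto
    qed
  qed
  have "(\<Sum>Z\<in>N0 n D. lab n (setof n (mk n (sdiff ?X Z)))) = (\<Sum>y\<in>?NB. lab n (setof n y))"
    by (rule sum.reindex_bij_betw[OF bij])
  moreover have "(\<Sum>Z\<in>N0 n D. lab n (setof n (mk n (sdiff ?X Z)))) = (\<Sum>Z\<in>N0 n D. lab n (sdiff ?X Z))"
    using setof_mk[OF sd] unfolding N0_def by (intro sum.cong) auto
  ultimately show ?thesis by simp
qed

lemma pow_sum_less: "(\<Sum>k<n. (2::nat)^k) < 2^n"
  by (induction n) auto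

lemma set_encode_less: "A \<subseteq> {..<n} \<Longrightarrow> set_encode A < 2^n"
proof -
  assume A: "A \<subseteq> {..<n}"
  have "set_encode A \<le> (\<Sum>k<n. (2::nat)^k)" unfolding set_encode_def
    using A by (intro sum_mono2) auto
  then show ?thesis using pow_sum_less[of n] by simp
qed

lemma card_verts: "card (hcube_verts n) = 2^n"
proof -
  have "hcube_verts n = {xs. set xs \<subseteq> (UNIV::bool set) \<and> length xs = n}" unfolding hcube_verts_def by auto
  then show ?thesis using card_lists_length_eq[of "UNIV::bool set" n] by simp
qed

lemma lab_bij:
  assumes n: "n mod 4 = 2"
  shows "bij_betw (\<lambda>x. lab n (setof n x)) (hcube_verts n) {1..card (hcube_verts n)}"
proof -
  let ?f = "\<lambda>x. lab n (setof n x)"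
  have inj: "inj_on ?f (hcube_verts n)"
  proof (rule inj_onI)
    fix x y assume xy: "x \<in> hcube_verts n" "y \<in> hcube_verts n" "?f x = ?f y"
    have "Phi n (setof n x) \<subseteq> {..<n}" "Phi n (setof n y) \<subseteq> {..<n}" unfolding Phi_def by auto
    then have "finite (Phi n (setof n x))" "finite (Phi n (setof n y))" by (auto intro: finite_subset)
    then have "Phi n (setof n x) = Phi n (setof n y)" using xy(3) unfolding lab_def
      using set_encode_eq by auto
    then have "setof n x = setof n y" using inj_onD[OF Phi_inj[OF n]] setof_sub by blast
    then show "x = y" using mk_setof xy(1,2) unfolding hcube_verts_def by (metis mem_Collect_eq)
  qed
  have sub: "?f ` hcube_verts n \<subseteq> {1..card (hcube_verts n)}"
  proof
    fix z assume "z \<in> ?f ` hcube_verts n"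
    then obtain x where z: "z = ?f x" by auto
    have "Phi n (setof n x) \<subseteq> {..<n}" unfolding Phi_def by auto
    then have "set_encode (Phi n (setof n x)) < 2^n" by (rule set_encode_less)
    then show "z \<in> {1..card (hcube_verts n)}" unfolding z lab_def card_verts by auto
  qed
  have fin: "finite (hcube_verts n)" using card_verts[of n] card.infinite by fastforce
  have "card (?f ` hcube_verts n) = card {1..card (hcube_verts n)}"
    using card_image[OF inj] by simp
  then have "?f ` hcube_verts n = {1..card (hcube_verts n)}"
    using sub by (intro card_subset_eq) auto
  then show ?thesis using inj unfolding bij_betw_def by simp
qed

theorem theorem3p1:
  fixes n :: nat and E I :: "nat set"
  assumes "n mod 4 = 2"
    and "E \<noteq> {}"
    and "E \<subseteq> {i. odd i \<and> 1 \<le> i \<and> i \<le> n - 1}"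
    and "I \<subseteq> {0..n div 2}"
    and "\<forall>i\<in>I. E \<inter> {i, n - i} = {}"
  shows "D_magic (hcube_verts n) hcube_adj (E \<union> (\<Union>i\<in>I. {i, n - i}))"
proof -
  let ?D = "E \<union> (\<Union>i\<in>I. {i, n - i})"
  have Dc: "\<forall>d\<in>?D. even d \<longrightarrow> n - d \<in> ?D"
  proof (intro ballI impI)
    fix d assume d: "d \<in> ?D" "even d"
    then have "d \<notin> E" using assms(3) by auto
    then obtain i where i: "i \<in> I" "d = i \<or> d = n - i" using d by auto
    have "i \<le> n" using i assms(4) by auto
    then show "n - d \<in> ?D" using i by auto
  qed
  let ?f = "\<lambda>x. lab n (setof n x)"
  have "is_D_magic_labeling (hcube_verts n) hcube_adj ?D ?f"
    unfolding is_D_magic_labeling_def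
  proof (intro conjI exI ballI)
    show "bij_betw ?f (hcube_verts n) {1..card (hcube_verts n)}" by (rule lab_bij[OF assms(1)])
  next
    fix x assume "x \<in> hcube_verts n"
    then have x: "length x = n" unfolding hcube_verts_def by simp
    have fX: "finite (setof n x)" using setof_sub finite_subset by blast
    show "(\<Sum>y\<in>dist_nbhd (hcube_verts n) hcube_adj ?D x. ?f y)
        = card (N0 n ?D) + (\<Sum>k<n. 2^k * card {Z\<in>N0 n ?D. odd (card (Z \<inter> Sk n k))})"
      unfolding nbhd_sum[OF x] by (rule sum_formula[OF assms(1) Dc fX])
  qed
  then show ?thesis unfolding D_magic_def by blast
qed

end
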